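(* Let $d,n\ge 2$, $0\le\varepsilon\le 1/256$, and let $\mathcal U$ be a configuration of $n$ opinions in $\mathbb S^{d-1}$ that is $\varepsilon$-inactive. Then there is a unique partition of $[n]$ into clusters of $\mathcal U$. Furthermore, if $\varepsilon<\frac{1}{d(d+1)}$, then there are at most $d$ clusters.
   Context: Opinions are unit vectors in $\mathbb R^d$; a configuration is an $n$-tuple $(\vec u_1,\dots,\vec u_n)$, $A_{ij}=\langle\vec u_i,\vec u_j\rangle$. A configuration is $\varepsilon$-inactive if for all $i,j$, either $|A_{ij}|\le\varepsilon$ or $|A_{ij}|\ge 1-\varepsilon$. For an $\varepsilon$-inactive configuration, a nonempty set $C\subseteq[n]$ is a cluster if $|A_{ij}|\ge1-\varepsilon$ for all $i,j\in C$, and $|A_{ij}|\le\varepsilon$ for all $i\in C$, $j\notin C$. *)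

theory Defs
  imports "HOL-Analysis.Analysis" "HOL-Library.Disjoint_Sets"
begin

text \<open>A configuration of n opinions is a map u from indices [n] = {1..n} to real^'d,
  with A_ij = u i \<bullet> u j.\<close>

definition eps_inactive :: "real \<Rightarrow> nat \<Rightarrow> (nat \<Rightarrow> real ^ 'd) \<Rightarrow> bool" where
  "eps_inactive eps n u \<longleftrightarrow>
     (\<forall>i\<in>{1..n}. \<forall>j\<in>{1..n}. \<bar>u i \<bullet> u j\<bar> \<le> eps \<or> \<bar>u i \<bullet> u j\<bar> \<ge> 1 - eps)"

definition is_cluster :: "real \<Rightarrow> nat \<Rightarrow> (nat \<Rightarrow> real ^ 'd) \<Rightarrow> nat set \<Rightarrow> bool" where
  "is_cluster eps n u C \<longleftrightarrow>
     C \<noteq> {} \<and> C \<subseteq> {1..n} \<and>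
     (\<forall>i\<in>C. \<forall>j\<in>C. \<bar>u i \<bullet> u j\<bar> \<ge> 1 - eps) \<and>
     (\<forall>i\<in>C. \<forall>j\<in>{1..n} - C. \<bar>u i \<bullet> u j\<bar> \<le> eps)"

definition cluster_partition :: "real \<Rightarrow> nat \<Rightarrow> (nat \<Rightarrow> real ^ 'd) \<Rightarrow> nat set set \<Rightarrow> bool" where
  "cluster_partition eps n u P \<longleftrightarrow>
     partition_on {1..n} P \<and> (\<forall>C\<in>P. is_cluster eps n u C)"

end

theory Submission imports Defs begin

lemma trans_lem:
  fixes x y z :: "'a::real_inner"
  assumes "x \<bullet> x = 1" "y \<bullet> y = 1" "z \<bullet> z = 1"
    and "\<bar>x \<bullet> y\<bar> \<ge> 1 - e" "\<bar>y \<bullet> z\<bar> \<ge> 1 - e"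
  shows "\<bar>x \<bullet> z\<bar> \<ge> 1 - 4*e"
proof -
  define s :: real where "s = (if x \<bullet> y \<ge> 0 then 1 else -1)"
  define t :: real where "t = (if y \<bullet> z \<ge> 0 then 1 else -1)"
  have s2: "s * s = 1" "t * t = 1" by (auto simp: s_def t_def)
  have sa: "s * (x \<bullet> y) = \<bar>x \<bullet> y\<bar>" "t * (y \<bullet> z) = \<bar>y \<bullet> z\<bar>" by (auto simp: s_def t_def)
  define a where "a = x - s *\<^sub>R y"
  define b where "b = s *\<^sub>R y - (s*t) *\<^sub>R z"
  have aa: "a \<bullet> a = 2 - 2*\<bar>x \<bullet> y\<bar>"
    unfolding a_def using assms s2 sa by (simp add: inner_diff_left inner_diff_right inner_commute algebra_simps)
  have bb: "b \<bullet> b = 2 - 2*\<bar>y \<bullet> z\<bar>"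
    unfolding b_def using assms s2 sa by (simp add: inner_diff_left inner_diff_right inner_commute algebra_simps)
  have ab: "(a+b) \<bullet> (a+b) = 2 - 2*(s*t)*(x \<bullet> z)"
    unfolding a_def b_def using assms s2 by (simp add: inner_diff_left inner_diff_right inner_commute algebra_simps)
  have "(a-b) \<bullet> (a-b) \<ge> 0" by simp
  hence "(a+b) \<bullet> (a+b) \<le> 2*(a \<bullet> a) + 2*(b \<bullet> b)"
    by (simp add: inner_diff_left inner_diff_right inner_add_left inner_add_right inner_commute algebra_simps)
  hence "(s*t)*(x \<bullet> z) \<ge> 1 - 4*e" using ab aa bb assms by linarith
  moreover have "(s*t)*(x \<bullet> z) \<le> \<bar>x \<bullet> z\<bar>"
    by (auto simp: s_def t_def abs_if)
  ultimately show ?thesis by linarith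
qed

lemma indep_lem:
  fixes V :: "('a::real_inner) set"
  assumes fin: "finite V" and un: "\<forall>v\<in>V. v \<bullet> v = 1"
    and orth: "\<forall>v\<in>V. \<forall>w\<in>V. v \<noteq> w \<longrightarrow> \<bar>v \<bullet> w\<bar> \<le> e"
    and e0: "0 \<le> e" and small: "(real (card V) - 1) * e < 1"
    and c: "(\<Sum>v\<in>V. c v *\<^sub>R v) = 0"
  shows "\<forall>v\<in>V. c v = 0"
proof (rule ccontr)
  assume "\<not> (\<forall>v\<in>V. c v = 0)"
  then obtain v0 where v0: "v0 \<in> V" "c v0 \<noteq> 0" by blast
  obtain a where a: "a \<in> V" "\<forall>v\<in>V. \<bar>c v\<bar> \<le> \<bar>c a\<bar>"
  proof -
    have "Max ((\<lambda>v. \<bar>c v\<bar>) ` V) \<in> (\<lambda>v. \<bar>c v\<bar>) ` V" using fin v0 by (intro Max_in) auto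
    then obtain a where "a \<in> V" "\<bar>c a\<bar> = Max ((\<lambda>v. \<bar>c v\<bar>) ` V)" by auto
    thus ?thesis using that fin by auto
  qed
  have pos: "\<bar>c a\<bar> > 0" using a v0 by force
  have "0 = (\<Sum>v\<in>V. c v *\<^sub>R v) \<bullet> a" using c by simp
  also have "\<dots> = (\<Sum>v\<in>V. c v * (v \<bullet> a))" by (simp add: inner_sum_left)
  also have "\<dots> = c a * (a \<bullet> a) + (\<Sum>v\<in>V-{a}. c v * (v \<bullet> a))"
    using fin a(1) by (simp add: sum.remove)
  finally have eq: "c a = - (\<Sum>v\<in>V-{a}. c v * (v \<bullet> a))" using un a(1) by simp
  have "\<bar>c a\<bar> \<le> (\<Sum>v\<in>V-{a}. \<bar>c v * (v \<bullet> a)\<bar>)"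
    unfolding eq abs_minus_cancel by (rule sum_abs)
  also have "\<dots> \<le> (\<Sum>v\<in>V-{a}. \<bar>c a\<bar> * e)"
  proof (rule sum_mono)
    fix v assume v: "v \<in> V - {a}"
    have "\<bar>v \<bullet> a\<bar> \<le> e" using orth v a(1) by auto
    thus "\<bar>c v * (v \<bullet> a)\<bar> \<le> \<bar>c a\<bar> * e"
      unfolding abs_mult using a(2) v by (intro mult_mono) auto
  qed
  also have "\<dots> = (real (card V) - 1) * (\<bar>c a\<bar> * e)"
  proof -
    have "card V \<ge> 1" using fin a(1) by (metis One_nat_def Suc_leI card_gt_0_iff empty_iff)
    thus ?thesis using fin a(1) by (simp add: card_Diff_singleton of_nat_diff)
  qed
  also have "\<dots> < \<bar>c a\<bar>"
  proof -
    have "(real (card V) - 1) * e * \<bar>c a\<bar> < 1 * \<bar>c a\<bar>"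
      using small pos by (rule mult_strict_right_mono)
    thus ?thesis by (simp add: algebra_simps)
  qed
  finally show False by simp
qed

theorem mainTheorem10:
  fixes u :: "nat \<Rightarrow> real ^ 'd" and n :: nat and eps :: real
  assumes "CARD('d) \<ge> 2" and "n \<ge> 2"
    and "0 \<le> eps" and "eps \<le> 1 / 256"
    and "\<forall>i\<in>{1..n}. norm (u i) = 1"
    and "eps_inactive eps n u"
  shows "(\<exists>!P. cluster_partition eps n u P) \<and>
         (eps < 1 / (real CARD('d) * (real CARD('d) + 1)) \<longrightarrow>
            (\<forall>P. cluster_partition eps n u P \<longrightarrow> card P \<le> CARD('d)))"
proof -
  note e0 = assms(3) and e1 = assms(4) and ina = assms(6)[unfolded eps_inactive_def]
  have un: "u i \<bullet> u i = 1" if "i \<in> {1..n}" for i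
    using assms(5) that by (metis power2_norm_eq_inner power_one)
  define R where "R i j \<longleftrightarrow> 1 - eps \<le> \<bar>u i \<bullet> u j\<bar>" for i j
  have Rsym: "R i j \<Longrightarrow> R j i" for i j by (simp add: R_def inner_commute)
  have Rrefl: "i \<in> {1..n} \<Longrightarrow> R i i" for i using un e0 by (simp add: R_def)
  have Rtrans: "R i k" if "i \<in> {1..n}" "j \<in> {1..n}" "k \<in> {1..n}" "R i j" "R j k" for i j k
  proof -
    have "\<bar>u i \<bullet> u k\<bar> \<ge> 1 - 4*eps"
      using trans_lem[of "u i" "u j" "u k" eps] that un unfolding R_def by blast
    hence "\<not> \<bar>u i \<bullet> u k\<bar> \<le> eps" using e1 by linarith
    moreover have "\<bar>u i \<bullet> u k\<bar> \<le> eps \<or> \<bar>u i \<bullet> u k\<bar> \<ge> 1 - eps" using ina that(1,3) by blast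
    ultimately show ?thesis by (auto simp: R_def)
  qed
  have notR: "\<not> R i j" if "\<bar>u i \<bullet> u j\<bar> \<le> eps" for i j
    using that e1 by (auto simp: R_def)
  define K where "K i = {j\<in>{1..n}. R i j}" for i
  define P0 where "P0 = K ` {1..n}"
  have Keq: "K i = K j" if "i \<in> {1..n}" "j \<in> {1..n}" "R i j" for i j
    unfolding K_def using that Rtrans Rsym by blast
  have clK: "is_cluster eps n u (K i)" if i: "i \<in> {1..n}" for i
    unfolding is_cluster_def
  proof (intro conjI ballI)
    show "K i \<noteq> {}" using i Rrefl by (auto simp: K_def)
    show "K i \<subseteq> {1..n}" by (auto simp: K_def)
  next
    fix j k assume "j \<in> K i" "k \<in> K i"
    thus "1 - eps \<le> \<bar>u j \<bullet> u k\<bar>" using i Rtrans Rsym unfolding K_def R_def[symmetric] by blast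
  next
    fix j k assume j: "j \<in> K i" and k: "k \<in> {1..n} - K i"
    have "\<not> R j k"
    proof
      assume "R j k"
      hence "R i k" using j k i Rtrans by (auto simp: K_def)
      thus False using k by (auto simp: K_def)
    qed
    moreover have "j \<in> {1..n}" "k \<in> {1..n}" using j k by (auto simp: K_def)
    ultimately show "\<bar>u j \<bullet> u k\<bar> \<le> eps" using ina unfolding R_def by force
  qed
  have partP0: "cluster_partition eps n u P0"
    unfolding cluster_partition_def
  proof (intro conjI ballI partition_onI)
    show "\<Union>P0 = {1..n}" using Rrefl by (auto simp: P0_def K_def)
    show "{} \<notin> P0" using Rrefl by (auto simp: P0_def K_def)
    fix p q assume "p \<in> P0" "q \<in> P0" "p \<noteq> q"
    obtain i where i: "i \<in> {1..n}" "p = K i" using \<open>p \<in> P0\<close> by (auto simp: P0_def)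
    obtain j where j: "j \<in> {1..n}" "q = K j" using \<open>q \<in> P0\<close> by (auto simp: P0_def)
    note ij = i(1) j(1) i(2) j(2)
    show "disjnt p q"
    proof (rule ccontr)
      assume "\<not> disjnt p q"
      then obtain k where "k \<in> K i" "k \<in> K j" using ij by (auto simp: disjnt_def)
      hence k: "k \<in> {1..n}" "R i k" "R j k" by (auto simp: K_def)
      have "K i = K k" "K j = K k" using Keq[OF ij(1) k(1) k(2)] Keq[OF ij(2) k(1) k(3)] by auto
      thus False using ij \<open>p \<noteq> q\<close> by simp
    qed
  next
    fix C assume "C \<in> P0" thus "is_cluster eps n u C" using clK by (auto simp: P0_def)
  qed
  have uniq: "P = P0" if cp: "cluster_partition eps n u P" for P
  proof -
    have part: "partition_on {1..n} P" and cl: "\<And>C. C \<in> P \<Longrightarrow> is_cluster eps n u C"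
      using cp by (auto simp: cluster_partition_def)
    have CK: "C = K i" if "C \<in> P" "i \<in> C" for C i
    proof -
      have c: "C \<subseteq> {1..n}" "\<forall>j\<in>C. \<forall>k\<in>C. R j k" "\<forall>j\<in>C. \<forall>k\<in>{1..n} - C. \<not> R j k"
        using cl[OF that(1)] notR by (auto simp: is_cluster_def R_def)
      show ?thesis
      proof
        show "C \<subseteq> K i" using c that by (auto simp: K_def)
        show "K i \<subseteq> C"
        proof
          fix x assume "x \<in> K i"
          hence x: "x \<in> {1..n}" "R i x" by (auto simp: K_def)
          show "x \<in> C"
          proof (rule ccontr)
            assume "x \<notin> C"
            thus False using c(3) that(2) x by blast
          qed
        qed
      qed
    qed
    show ?thesis
    proof
      show "P \<subseteq> P0"
      proof
        fix C assume C: "C \<in> P"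
        then obtain i where "i \<in> C" using partition_onD3[OF part] by fastforce
        moreover have "i \<in> {1..n}" using partition_onD1[OF part] C \<open>i \<in> C\<close> by blast
        ultimately show "C \<in> P0" using CK[OF C \<open>i \<in> C\<close>] unfolding P0_def by blast
      qed
    next
      show "P0 \<subseteq> P"
      proof
        fix C assume "C \<in> P0"
        then obtain i where i: "i \<in> {1..n}" "C = K i" by (auto simp: P0_def)
        then obtain D where "D \<in> P" "i \<in> D" using partition_onD1[OF part] by blast
        thus "C \<in> P" using CK i by auto
      qed
    qed
  qed
  have part1: "\<exists>!P. cluster_partition eps n u P" using partP0 uniq by blast
  have part2: "card P \<le> CARD('d)"
    if small: "eps < 1 / (real CARD('d) * (real CARD('d) + 1))" and cp: "cluster_partition eps n u P" for P
  proof (rule ccontr)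
    assume "\<not> card P \<le> CARD('d)"
    hence big: "Suc CARD('d) \<le> card P" by simp
    have part: "partition_on {1..n} P" and cl: "\<And>C. C \<in> P \<Longrightarrow> is_cluster eps n u C"
      using cp by (auto simp: cluster_partition_def)
    obtain Q where Q: "Q \<subseteq> P" "card Q = Suc CARD('d)" "finite Q"
      using obtain_subset_with_card_n[OF big] by blast
    define rep where "rep C = (SOME i. i \<in> C)" for C :: "nat set"
    have rep: "rep C \<in> C" if "C \<in> P" for C
      using cl[OF that] unfolding rep_def is_cluster_def by (auto intro: someI_ex)
    have repn: "rep C \<in> {1..n}" if "C \<in> P" for C
      using rep[OF that] cl[OF that] unfolding is_cluster_def by auto
    have small_off: "\<bar>u (rep C) \<bullet> u (rep D)\<bar> \<le> eps" if "C \<in> P" "D \<in> P" "C \<noteq> D" for C D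
    proof -
      have "disjnt C D" using disjointD[OF partition_onD2[OF part] that] by (simp add: disjnt_def)
      hence "rep D \<notin> C" using rep[OF that(2)] by (auto simp: disjnt_def)
      thus ?thesis using cl[OF that(1)] rep[OF that(1)] repn[OF that(2)] unfolding is_cluster_def by blast
    qed
    define V where "V = (\<lambda>C. u (rep C)) ` Q"
    have inj: "inj_on (\<lambda>C. u (rep C)) Q"
    proof (rule inj_onI)
      fix C D assume CD: "C \<in> Q" "D \<in> Q" "u (rep C) = u (rep D)"
      show "C = D"
      proof (rule ccontr)
        assume "C \<noteq> D"
        hence "\<bar>u (rep C) \<bullet> u (rep D)\<bar> \<le> eps" using small_off[of C D] CD Q by blast
        moreover have "u (rep C) \<bullet> u (rep D) = 1" using CD un repn Q by auto
        ultimately show False using e1 by simp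
      qed
    qed
    have cardV: "card V = Suc CARD('d)" using inj Q by (simp add: V_def card_image)
    have finV: "finite V" using Q by (simp add: V_def)
    have dpos: "real CARD('d) > 0" by simp
    have "eps * (real CARD('d) * (real CARD('d) + 1)) < 1"
      using small dpos by (simp add: pos_less_divide_eq)
    moreover have "eps * real CARD('d) \<le> eps * (real CARD('d) * (real CARD('d) + 1))"
      using e0 dpos by (intro mult_left_mono) (auto simp: algebra_simps)
    ultimately have dsmall: "(real (card V) - 1) * eps < 1" using cardV by (simp add: algebra_simps)
    have "independent V"
      unfolding independent_explicit
    proof (intro conjI allI impI finV)
      fix c :: "real ^ 'd \<Rightarrow> real" assume "(\<Sum>v\<in>V. c v *\<^sub>R v) = 0"
      thus "\<forall>v\<in>V. c v = 0"
      proof (rule indep_lem[OF finV _ _ e0 dsmall, rotated 2])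
        show "\<forall>v\<in>V. v \<bullet> v = 1" using un repn Q by (auto simp: V_def)
        show "\<forall>v\<in>V. \<forall>w\<in>V. v \<noteq> w \<longrightarrow> \<bar>v \<bullet> w\<bar> \<le> eps"
          using small_off Q by (auto simp: V_def)
      qed
    qed
    hence "card V \<le> DIM(real ^ 'd)" using independent_bound by blast
    thus False using cardV by simp
  qed
  show ?thesis using part1 part2 by blast
qed

end
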